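(* Fix $\alpha\in(0,1]$, $\beta\in[1,\infty)$ and integers $m,n\ge2$. Suppose there is an $\alpha$-envy-free mechanism for the job scheduling problem over the normalized instances $\mathcal{N}$ with $m+1$ machines and $n+1$ jobs whose allocation function gives a $\beta$-approximation to the optimal makespan. Then there is an $\alpha$-envy-free mechanism for the job scheduling problem over the general instances $\mathcal{C}$ with $m$ machines and $n$ jobs whose allocation function gives a $\beta$-approximation to the optimal makespan.
   Context: For $m'$ machines and $n'$ jobs: an instance is $c\in\mathbb{R}_{\ge0}^{m'\times n'}$, $c_i(S)=\sum_{j\in S}c_{i,j}$. General instances $\mathcal{C}=\mathbb{R}_{\ge0}^{m'\times n'}$; normalized instances $\mathcal{N}=\{c\in\mathcal{C}:\exists C,\ c_i([n'])=C\ \forall i\}$. An allocation is a tuple of pairwise disjoint subsets of $[n']$ with union $[n']$. A mechanism $(A,p)$ over $\mathcal{I}$ assigns to each $c$ an allocation $A(c)$ and payments $p(c)\in\mathbb{R}^{m'}$ (written $A_i,p_i$). It is $\alpha$-envy-free ($\alpha\in(0,1]$) if for every $c\in\mathcal{I}$ and all machines $i,j$: $\alpha\, c_i(A_i)-p_i\le c_i(A_j)-p_j$. $\mathrm{OPT}(c)=\min_X\max_i c_i(X_i)$ over allocations $X$; $A$ gives a $\beta$-approximation if $\max_i c_i(A(c)_i)\le\beta\,\mathrm{OPT}(c)$ for all $c\in\mathcal{I}$. *)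

theory Defs
  imports Complex_Main
begin

(* Machines are 0..<m, jobs are 0..<n.  An instance is a cost matrix
   c :: nat => nat => real (c i j = cost of job j on machine i), represented
   canonically: entries outside the m x n range are 0. *)

type_synonym sched_instance = "nat \<Rightarrow> nat \<Rightarrow> real"
type_synonym allocation = "nat \<Rightarrow> nat set"   (* machine i \<mapsto> set of jobs A_i *)
type_synonym payments = "nat \<Rightarrow> real"

definition cost :: "sched_instance \<Rightarrow> nat \<Rightarrow> nat set \<Rightarrow> real" where
  "cost c i S = (\<Sum>j\<in>S. c i j)"

definition general_instances :: "nat \<Rightarrow> nat \<Rightarrow> sched_instance set" where
  "general_instances m n =
     {c. (\<forall>i<m. \<forall>j<n. 0 \<le> c i j) \<and> (\<forall>i j. \<not>(i < m \<and> j < n) \<longrightarrow> c i j = 0)}"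

definition normalized_instances :: "nat \<Rightarrow> nat \<Rightarrow> sched_instance set" where
  "normalized_instances m n =
     {c \<in> general_instances m n. \<exists>C. \<forall>i<m. cost c i {..<n} = C}"

definition is_allocation :: "nat \<Rightarrow> nat \<Rightarrow> allocation \<Rightarrow> bool" where
  "is_allocation m n X \<longleftrightarrow>
     (\<forall>i<m. \<forall>k<m. i \<noteq> k \<longrightarrow> X i \<inter> X k = {}) \<and> (\<Union>i<m. X i) = {..<n}"

definition alpha_envy_free ::
  "real \<Rightarrow> nat \<Rightarrow> sched_instance set \<Rightarrow> (sched_instance \<Rightarrow> allocation) \<Rightarrow> (sched_instance \<Rightarrow> payments) \<Rightarrow> bool" where
  "alpha_envy_free \<alpha> m I A p \<longleftrightarrow>
     (\<forall>c\<in>I. \<forall>i<m. \<forall>j<m. \<alpha> * cost c i (A c i) - p c i \<le> cost c i (A c j) - p c j)"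

definition makespan :: "nat \<Rightarrow> sched_instance \<Rightarrow> allocation \<Rightarrow> real" where
  "makespan m c X = Max ((\<lambda>i. cost c i (X i)) ` {..<m})"

definition OPT :: "nat \<Rightarrow> nat \<Rightarrow> sched_instance \<Rightarrow> real" where
  "OPT m n c = (INF X\<in>{X. is_allocation m n X}. makespan m c X)"

definition is_mechanism ::
  "nat \<Rightarrow> nat \<Rightarrow> sched_instance set \<Rightarrow> (sched_instance \<Rightarrow> allocation) \<Rightarrow> (sched_instance \<Rightarrow> payments) \<Rightarrow> bool" where
  "is_mechanism m n I A p \<longleftrightarrow> (\<forall>c\<in>I. is_allocation m n (A c))"

definition beta_approx ::
  "real \<Rightarrow> nat \<Rightarrow> nat \<Rightarrow> sched_instance set \<Rightarrow> (sched_instance \<Rightarrow> allocation) \<Rightarrow> bool" where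
  "beta_approx \<beta> m n I A \<longleftrightarrow> (\<forall>c\<in>I. makespan m c (A c) \<le> \<beta> * OPT m n c)"

end

theory Submission
  imports Defs
begin

lemma gen_nonneg: "c \<in> general_instances m n \<Longrightarrow> 0 \<le> c i j"
  unfolding general_instances_def by (cases "i < m \<and> j < n") auto

lemma cost_nonneg: "c \<in> general_instances m n \<Longrightarrow> 0 \<le> cost c i X"
  unfolding cost_def by (simp add: sum_nonneg gen_nonneg)

lemma alloc_sub: "is_allocation m n X \<Longrightarrow> i < m \<Longrightarrow> X i \<subseteq> {..<n}"
  unfolding is_allocation_def by blast

lemma makespan_ge: "i < m \<Longrightarrow> cost c i (X i) \<le> makespan m c X"
  unfolding makespan_def by (rule Max_ge) auto

lemma makespan_le: "0 < m \<Longrightarrow> (\<And>i. i < m \<Longrightarrow> cost c i (X i) \<le> b) \<Longrightarrow> makespan m c X \<le> b"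
  unfolding makespan_def by (subst Max_le_iff) auto

lemma makespan_nonneg: "0 < m \<Longrightarrow> c \<in> general_instances m' n \<Longrightarrow> 0 \<le> makespan m c X"
  using makespan_ge[of 0 m c X] cost_nonneg[of c m' n 0 "X 0"] by linarith

lemma OPT_le: "0 < m \<Longrightarrow> c \<in> general_instances m' n' \<Longrightarrow> is_allocation m n X \<Longrightarrow> OPT m n c \<le> makespan m c X"
  unfolding OPT_def
  apply (rule cInf_lower)
   apply simp
  apply (rule bdd_belowI[of _ 0])
  using makespan_nonneg by blast

lemma alloc_exists: "0 < m \<Longrightarrow> is_allocation m n (\<lambda>i. if i = 0 then {..<n} else {})"
  unfolding is_allocation_def
proof (intro conjI allI impI)
  assume "0 < m"
  show "(\<Union>i<m. if i = 0 then {..<n} else {}) = {..<n}"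
    using \<open>0<m\<close> by (auto split: if_splits)
qed auto

lemma OPT_ge: "0 < m \<Longrightarrow> (\<And>X. is_allocation m n X \<Longrightarrow> b \<le> makespan m c X) \<Longrightarrow> b \<le> OPT m n c"
  unfolding OPT_def
  apply (rule cINF_greatest)
  using alloc_exists by auto


definition tot :: "nat \<Rightarrow> nat \<Rightarrow> sched_instance \<Rightarrow> real" where
  "tot m n c = (\<Sum>i<m. cost c i {..<n})"

definition bigD :: "real \<Rightarrow> nat \<Rightarrow> nat \<Rightarrow> sched_instance \<Rightarrow> real" where
  "bigD \<beta> m n c = real n * (\<beta> * tot m n c + 1) + tot m n c"

definition ext :: "real \<Rightarrow> nat \<Rightarrow> nat \<Rightarrow> sched_instance \<Rightarrow> sched_instance" where
  "ext \<beta> m n c = (\<lambda>i j. if i < m \<and> j < n then c i j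
      else if i < m \<and> j = n then bigD \<beta> m n c - cost c i {..<n}
      else if i = m \<and> j < n then bigD \<beta> m n c / real n else 0)"

lemma tot_nonneg: "c \<in> general_instances m n \<Longrightarrow> 0 \<le> tot m n c"
  unfolding tot_def by (simp add: sum_nonneg cost_nonneg)

lemma row_le_tot: "c \<in> general_instances m n \<Longrightarrow> i < m \<Longrightarrow> cost c i {..<n} \<le> tot m n c"
  unfolding tot_def by (rule member_le_sum) (auto simp: cost_nonneg)

lemma cost_ext: "i < m \<Longrightarrow> X \<subseteq> {..<n} \<Longrightarrow> cost (ext \<beta> m n c) i X = cost c i X"
  unfolding cost_def ext_def by (rule sum.cong) auto

lemma ext_row: "i < m \<Longrightarrow> cost (ext \<beta> m n c) i {..<Suc n} = bigD \<beta> m n c"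
  using cost_ext[of i m "{..<n}" n \<beta> c]
  by (simp add: cost_def ext_def)

lemma ext_lastrow: "0 < n \<Longrightarrow> cost (ext \<beta> m n c) m {..<Suc n} = bigD \<beta> m n c"
  by (simp add: cost_def ext_def)

lemma D_big1: "c \<in> general_instances m n \<Longrightarrow> 0 \<le> \<beta> \<Longrightarrow> 0 < n \<Longrightarrow> \<beta> * tot m n c < bigD \<beta> m n c / real n"
proof -
  assume a: "c \<in> general_instances m n" "0 \<le> \<beta>" "0 < n"
  have "bigD \<beta> m n c / real n = (\<beta> * tot m n c + 1) + tot m n c / real n"
    using a(3) by (simp add: bigD_def field_simps)
  moreover have "0 \<le> tot m n c / real n" using tot_nonneg[OF a(1)] by simp
  ultimately show ?thesis by linarith
qed

lemma D_big2: "c \<in> general_instances m n \<Longrightarrow> 0 \<le> \<beta> \<Longrightarrow> 0 < n \<Longrightarrow> i < m \<Longrightarrow> \<beta> * tot m n c < bigD \<beta> m n c - cost c i {..<n}"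
proof -
  assume a: "c \<in> general_instances m n" "0 \<le> \<beta>" "0 < n" "i < m"
  have "\<beta> * tot m n c + 1 \<le> real n * (\<beta> * tot m n c + 1)"
  proof -
    have "0 \<le> \<beta> * tot m n c + 1" using a(2) tot_nonneg[OF a(1)] by simp
    moreover have "1 \<le> real n" using a(3) by simp
    ultimately show ?thesis using mult_right_mono[of 1 "real n" "\<beta> * tot m n c + 1"] by simp
  qed
  then show ?thesis using row_le_tot[OF a(1) a(4)] unfolding bigD_def by linarith
qed

lemma ext_norm: "c \<in> general_instances m n \<Longrightarrow> 0 \<le> \<beta> \<Longrightarrow> 0 < n \<Longrightarrow> ext \<beta> m n c \<in> normalized_instances (m+1) (n+1)"
proof -
  assume a: "c \<in> general_instances m n" "0 \<le> \<beta>" "0 < n"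
  have nn: "0 \<le> ext \<beta> m n c i j" for i j
  proof -
    have "0 \<le> bigD \<beta> m n c / real n" using D_big1[OF a] tot_nonneg[OF a(1)] a(2) by (smt (verit) mult_nonneg_nonneg)
    moreover have "i < m \<Longrightarrow> 0 \<le> bigD \<beta> m n c - cost c i {..<n}"
      using D_big2[OF a, of i] tot_nonneg[OF a(1)] a(2) by (smt (verit) mult_nonneg_nonneg)
    ultimately show ?thesis using gen_nonneg[OF a(1)] unfolding ext_def by auto
  qed
  have out: "\<not>(i < m+1 \<and> j < n+1) \<Longrightarrow> ext \<beta> m n c i j = 0" for i j
    unfolding ext_def by auto
  have rows: "\<forall>i<m+1. cost (ext \<beta> m n c) i {..<n+1} = bigD \<beta> m n c"
    using ext_row ext_lastrow a(3) by (auto simp: less_Suc_eq)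
  show ?thesis unfolding normalized_instances_def general_instances_def
    using nn out rows by auto
qed


lemma ext_gen: "c \<in> general_instances m n \<Longrightarrow> 0 \<le> \<beta> \<Longrightarrow> 0 < n \<Longrightarrow> ext \<beta> m n c \<in> general_instances (m+1) (n+1)"
  using ext_norm unfolding normalized_instances_def by blast

lemma single_le: "c \<in> general_instances m' n' \<Longrightarrow> finite S \<Longrightarrow> j \<in> S \<Longrightarrow> c i j \<le> cost c i S"
  unfolding cost_def by (rule member_le_sum) (auto simp: gen_nonneg)

lemma OPT_ext: 
  assumes c: "c \<in> general_instances m n" and "0 < m" "0 < n" "0 \<le> \<beta>" and X: "is_allocation m n X"
  shows "OPT (m+1) (n+1) (ext \<beta> m n c) \<le> makespan m c X"
proof -
  define X' where "X' = (\<lambda>i. if i < m then X i else if i = m then {n} else {})"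
  have sub: "i < m \<Longrightarrow> X i \<subseteq> {..<n}" for i using alloc_sub[OF X] .
  have "is_allocation (m+1) (n+1) X'"
    unfolding is_allocation_def
  proof (intro conjI allI impI)
    fix i k assume "i < m+1" "k < m+1" "i \<noteq> k"
    then show "X' i \<inter> X' k = {}"
      using X sub unfolding X'_def is_allocation_def by (auto simp: less_Suc_eq)
  next
    have "(\<Union>i<m+1. X' i) = (\<Union>i<m. X i) \<union> {n}"
      unfolding X'_def by (auto simp: less_Suc_eq)
    also have "\<dots> = {..<n+1}" using X unfolding is_allocation_def by auto
    finally show "(\<Union>i<m+1. X' i) = {..<n+1}" .
  qed
  then have "OPT (m+1) (n+1) (ext \<beta> m n c) \<le> makespan (m+1) (ext \<beta> m n c) X'"
    using OPT_le[of "m+1" "ext \<beta> m n c"] ext_gen[OF c assms(4,3)] by auto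
  also have "\<dots> \<le> makespan m c X"
  proof (rule makespan_le)
    fix i assume "i < m+1"
    then consider "i < m" | "i = m" by linarith
    then show "cost (ext \<beta> m n c) i (X' i) \<le> makespan m c X"
    proof cases
      case 1 then show ?thesis using cost_ext[OF 1 sub[OF 1]] makespan_ge[OF 1] by (simp add: X'_def)
    next
      case 2 then show ?thesis using makespan_nonneg[OF assms(2) c] 
        by (simp add: X'_def cost_def ext_def)
    qed
  qed simp
  finally show ?thesis .
qed

lemma struct_ext:
  assumes c: "c \<in> general_instances m n" and "0 < m" "0 < n" "0 \<le> \<beta>"
    and Y: "is_allocation (m+1) (n+1) Y"
    and mk: "makespan (m+1) (ext \<beta> m n c) Y \<le> \<beta> * tot m n c"
  shows "(\<forall>i<m. Y i \<subseteq> {..<n}) \<and> is_allocation m n Y"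
proof -
  let ?c = "ext \<beta> m n c"
  have g: "?c \<in> general_instances (m+1) (n+1)" using ext_gen[OF c assms(4,3)] .
  have fin: "i < m+1 \<Longrightarrow> finite (Y i)" for i using alloc_sub[OF Y] finite_subset by blast
  have cb: "i < m+1 \<Longrightarrow> cost ?c i (Y i) \<le> \<beta> * tot m n c" for i
    using makespan_ge[of i "m+1" ?c Y] mk by linarith
  have "n \<in> (\<Union>i<m+1. Y i)" using Y unfolding is_allocation_def by auto
  then obtain k where k: "k < m+1" "n \<in> Y k" by auto
  have km: "k = m"
  proof (rule ccontr)
    assume "k \<noteq> m" then have "k < m" using k by simp
    have "?c k n \<le> cost ?c k (Y k)" using single_le[OF g fin[OF k(1)] k(2)] .
    moreover have "?c k n = bigD \<beta> m n c - cost c k {..<n}" using \<open>k<m\<close> by (simp add: ext_def)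
    ultimately show False using D_big2[OF c assms(4,3) \<open>k<m\<close>] cb[OF k(1)] by linarith
  qed
  have nm: "j < n \<Longrightarrow> j \<notin> Y m" for j
  proof
    assume "j < n" "j \<in> Y m"
    have "?c m j \<le> cost ?c m (Y m)" using single_le[OF g fin \<open>j \<in> Y m\<close>] by simp
    moreover have "?c m j = bigD \<beta> m n c / real n" using \<open>j<n\<close> by (simp add: ext_def)
    ultimately show False using D_big1[OF c assms(4,3)] cb[of m] by linarith
  qed
  have subs: "\<forall>i<m. Y i \<subseteq> {..<n}"
  proof (intro allI impI subsetI)
    fix i j assume "i < m" "j \<in> Y i"
    then have "j < n+1" using alloc_sub[OF Y, of i] by auto
    moreover have "j \<noteq> n" using Y k km \<open>i<m\<close> \<open>j \<in> Y i\<close> unfolding is_allocation_def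
      by (metis disjoint_iff less_Suc_eq less_irrefl_nat Suc_eq_plus1)
    ultimately show "j \<in> {..<n}" by simp
  qed
  have "(\<Union>i<m. Y i) = {..<n}"
  proof
    show "(\<Union>i<m. Y i) \<subseteq> {..<n}" using subs by auto
  next
    show "{..<n} \<subseteq> (\<Union>i<m. Y i)"
    proof
      fix j assume "j \<in> {..<n}"
      then have "j \<in> (\<Union>i<m+1. Y i)" using Y unfolding is_allocation_def by auto
      then obtain i where "i < m+1" "j \<in> Y i" by auto
      moreover have "i \<noteq> m" using nm \<open>j \<in> {..<n}\<close> \<open>j \<in> Y i\<close> by auto
      ultimately show "j \<in> (\<Union>i<m. Y i)" by auto
    qed
  qed
  then show ?thesis using subs Y unfolding is_allocation_def by auto
qed

theorem mainTheorem10: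
  fixes \<alpha> \<beta> :: real and m n :: nat
  assumes "0 < \<alpha>" "\<alpha> \<le> 1" "1 \<le> \<beta>" "2 \<le> m" "2 \<le> n"
    and "\<exists>A p. is_mechanism (m+1) (n+1) (normalized_instances (m+1) (n+1)) A p
              \<and> alpha_envy_free \<alpha> (m+1) (normalized_instances (m+1) (n+1)) A p
              \<and> beta_approx \<beta> (m+1) (n+1) (normalized_instances (m+1) (n+1)) A"
  shows "\<exists>A p. is_mechanism m n (general_instances m n) A p
              \<and> alpha_envy_free \<alpha> m (general_instances m n) A p
              \<and> beta_approx \<beta> m n (general_instances m n) A"
proof -
  obtain A p where mech: "is_mechanism (m+1) (n+1) (normalized_instances (m+1) (n+1)) A p"
    and ef: "alpha_envy_free \<alpha> (m+1) (normalized_instances (m+1) (n+1)) A p"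
    and ap: "beta_approx \<beta> (m+1) (n+1) (normalized_instances (m+1) (n+1)) A"
    using assms(6) by blast
  have m0: "0 < m" and n0: "0 < n" and b0: "0 \<le> \<beta>" using assms by auto
  define E where "E = ext \<beta> m n"
  have key: "(\<forall>i<m. A (E c) i \<subseteq> {..<n}) \<and> is_allocation m n (A (E c))
      \<and> makespan m c (A (E c)) \<le> \<beta> * OPT m n c"
    if c: "c \<in> general_instances m n" for c
  proof -
    have cn: "E c \<in> normalized_instances (m+1) (n+1)" unfolding E_def using ext_norm[OF c b0 n0] .
    have Y: "is_allocation (m+1) (n+1) (A (E c))" using mech cn unfolding is_mechanism_def by blast
    have mk: "makespan (m+1) (E c) (A (E c)) \<le> \<beta> * OPT (m+1) (n+1) (E c)"
      using ap cn unfolding beta_approx_def by blast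
    have o1: "OPT (m+1) (n+1) (E c) \<le> OPT m n c"
      unfolding E_def by (rule OPT_ge[OF m0]) (rule OPT_ext[OF c m0 n0 b0])
    have "OPT (m+1) (n+1) (E c) \<le> makespan m c (\<lambda>i. if i = 0 then {..<n} else {})"
      unfolding E_def by (rule OPT_ext[OF c m0 n0 b0 alloc_exists[OF m0]])
    also have "\<dots> \<le> tot m n c"
    proof (rule makespan_le[OF m0])
      fix i assume "i < m"
      have "cost c i (if i = 0 then {..<n} else {}) \<le> cost c i {..<n}"
        using cost_nonneg[OF c, of i "{..<n}"] by (simp add: cost_def)
      then show "cost c i (if i = 0 then {..<n} else {}) \<le> tot m n c"
        using row_le_tot[OF c \<open>i<m\<close>] by linarith
    qed
    finally have o2: "OPT (m+1) (n+1) (E c) \<le> tot m n c" .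
    have mk2: "makespan (m+1) (ext \<beta> m n c) (A (ext \<beta> m n c)) \<le> \<beta> * tot m n c"
      using mk mult_left_mono[OF o2 b0] unfolding E_def by linarith
    have st: "(\<forall>i<m. A (E c) i \<subseteq> {..<n}) \<and> is_allocation m n (A (E c))"
      using struct_ext[OF c m0 n0 b0 Y[unfolded E_def] mk2] unfolding E_def by simp
    have "makespan m c (A (E c)) \<le> makespan (m+1) (E c) (A (E c))"
    proof (rule makespan_le[OF m0])
      fix i assume "i < m"
      then show "cost c i (A (E c) i) \<le> makespan (m + 1) (E c) (A (E c))"
        using makespan_ge[of i "m+1" "E c" "A (E c)"] cost_ext[OF \<open>i<m\<close>, of "A (E c) i" n \<beta> c] st
        unfolding E_def by auto
    qed
    also have "\<dots> \<le> \<beta> * OPT m n c" using mk mult_left_mono[OF o1 b0] by linarith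
    finally show ?thesis using st by blast
  qed
  show ?thesis
  proof (intro exI conjI)
    show "is_mechanism m n (general_instances m n) (\<lambda>c. A (E c)) (\<lambda>c. p (E c))"
      unfolding is_mechanism_def using key by blast
    show "beta_approx \<beta> m n (general_instances m n) (\<lambda>c. A (E c))"
      unfolding beta_approx_def using key by blast
    show "alpha_envy_free \<alpha> m (general_instances m n) (\<lambda>c. A (E c)) (\<lambda>c. p (E c))"
      unfolding alpha_envy_free_def
    proof (intro ballI allI impI)
      fix c i j assume c: "c \<in> general_instances m n" and ij: "i < m" "j < m"
      have cn: "E c \<in> normalized_instances (m+1) (n+1)" unfolding E_def using ext_norm[OF c b0 n0] .
      have "\<alpha> * cost (E c) i (A (E c) i) - p (E c) i \<le> cost (E c) i (A (E c) j) - p (E c) j"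
        using ef cn ij unfolding alpha_envy_free_def by auto
      moreover have "cost (E c) i (A (E c) i) = cost c i (A (E c) i)"
        unfolding E_def using cost_ext[OF ij(1)] key[OF c] ij by (simp add: E_def)
      moreover have "cost (E c) i (A (E c) j) = cost c i (A (E c) j)"
        unfolding E_def using cost_ext[OF ij(1)] key[OF c] ij by (simp add: E_def)
      ultimately show "\<alpha> * cost c i (A (E c) i) - p (E c) i \<le> cost c i (A (E c) j) - p (E c) j"
        by simp
    qed
  qed
qed

end
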